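(* Let $(G_n)_{n\in\mathbb{N}}$ be an $\mathrm{FO}$-convergent sequence of finite graphs with modeling limit $L$, and let $\xi(x)$ be a formula in the language of graphs with one free variable such that $\xi(L)$ is finite and nonempty, $\xi(L)$ contains no nonempty proper subset of the form $\chi(L)$ for a formula $\chi(x)$ in the language of graphs, and $|\xi(G_n)|=|\xi(L)|$ for every $n$. Then for any finitely many formulas $\phi_1,\dots,\phi_k$ in the language of rooted graphs there exist a sequence $(r_n)$ with $r_n\in\xi(G_n)$ and a vertex $r\in\xi(L)$ such that $\lim_{n\to\infty}\langle\phi_i,(G_n,r_n)\rangle=\langle\phi_i,(L,r)\rangle$ for each $i\in\{1,\dots,k\}$.
   Context: Graphs are first-order structures in the language with one binary (edge) relation. For a formula $\phi$ with $p$ free variables and a structure $G$, $\phi(G)=\{\mathbf{v}\in V(G)^p : G\models\phi(\mathbf{v})\}$. The Stone pairing of $\phi$ ($p\ge1$) with a finite graph $G$ is $\langle\phi,G\rangle=|\phi(G)|/|V(G)|^p$; for sentences it is $1$ if $G\models\phi$ and $0$ otherwise. A sequence of finite graphs is $\mathrm{FO}$-convergent if $(\langle\phi,G_n\rangle)$ converges for every formula $\phi$. A modeling is a graph $L$ whose vertex set is a standard Borel space with a probability measure $\nu$ such that every first-order definable set $\phi(L)\subseteq V(L)^p$ is measurable; $\langle\phi,L\rangle=\nu^{\otimes p}(\phi(L))$ (and $1$/$0$ for sentences). $L$ is a modeling limit of $(G_n)$ if $\lim_n\langle\phi,G_n\rangle=\langle\phi,L\rangle$ for all $\phi$. The language of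 rooted graphs adds a constant symbol $\mathrm{Root}$; $(G,r)$ is $G$ with $\mathrm{Root}$ interpreted as $r$, and Stone pairings with rooted structures are defined in the same way. *)

theory Defs
  imports "HOL-Probability.Probability"
begin

datatype trm = Var nat | Root

datatype fm = Eq trm trm | Adj trm trm | Neg fm | Conj fm fm | Ex nat fm

fun tvars :: "trm \<Rightarrow> nat set" where
  "tvars (Var i) = {i}"
| "tvars Root = {}"

fun fv :: "fm \<Rightarrow> nat set" where
  "fv (Eq s t) = tvars s \<union> tvars t"
| "fv (Adj s t) = tvars s \<union> tvars t"
| "fv (Neg \<phi>) = fv \<phi>"
| "fv (Conj \<phi> \<psi>) = fv \<phi> \<union> fv \<psi>"
| "fv (Ex x \<phi>) = fv \<phi> - {x}"

text \<open>Formulas of the (unrooted) language of graphs: no occurrence of Root.\<close>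
fun rootfree_t :: "trm \<Rightarrow> bool" where
  "rootfree_t (Var i) = True"
| "rootfree_t Root = False"

fun rootfree :: "fm \<Rightarrow> bool" where
  "rootfree (Eq s t) = (rootfree_t s \<and> rootfree_t t)"
| "rootfree (Adj s t) = (rootfree_t s \<and> rootfree_t t)"
| "rootfree (Neg \<phi>) = rootfree \<phi>"
| "rootfree (Conj \<phi> \<psi>) = (rootfree \<phi> \<and> rootfree \<psi>)"
| "rootfree (Ex x \<phi>) = rootfree \<phi>"

text \<open>Semantics in the structure with vertex set V, edge relation E and Root interpreted as r.
  (For formulas of the unrooted language the value of r is irrelevant.)\<close>
fun tval :: "'v \<Rightarrow> (nat \<Rightarrow> 'v) \<Rightarrow> trm \<Rightarrow> 'v" where
  "tval r \<sigma> (Var i) = \<sigma> i"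
| "tval r \<sigma> Root = r"

fun sat :: "'v set \<Rightarrow> ('v \<Rightarrow> 'v \<Rightarrow> bool) \<Rightarrow> 'v \<Rightarrow> (nat \<Rightarrow> 'v) \<Rightarrow> fm \<Rightarrow> bool" where
  "sat V E r \<sigma> (Eq s t) = (tval r \<sigma> s = tval r \<sigma> t)"
| "sat V E r \<sigma> (Adj s t) = E (tval r \<sigma> s) (tval r \<sigma> t)"
| "sat V E r \<sigma> (Neg \<phi>) = (\<not> sat V E r \<sigma> \<phi>)"
| "sat V E r \<sigma> (Conj \<phi> \<psi>) = (sat V E r \<sigma> \<phi> \<and> sat V E r \<sigma> \<psi>)"
| "sat V E r \<sigma> (Ex x \<phi>) = (\<exists>v\<in>V. sat V E r (\<sigma>(x := v)) \<phi>)"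

text \<open>Finite structure (V,E) rooted at r: the tuples of phi(G) are the assignments of the
  free variables of phi to vertices.\<close>
definition stone_fin :: "'v set \<Rightarrow> ('v \<Rightarrow> 'v \<Rightarrow> bool) \<Rightarrow> 'v \<Rightarrow> fm \<Rightarrow> real" where
  "stone_fin V E r \<phi> =
     (if fv \<phi> = {} then (if sat V E r (\<lambda>_. undefined) \<phi> then 1 else 0)
      else real (card {\<sigma> \<in> PiE (fv \<phi>) (\<lambda>_. V). sat V E r \<sigma> \<phi>})
           / real (card V) ^ card (fv \<phi>))"

definition defset_mod :: "'a measure \<Rightarrow> ('a \<Rightarrow> 'a \<Rightarrow> bool) \<Rightarrow> 'a \<Rightarrow> fm \<Rightarrow> (nat \<Rightarrow> 'a) set" where
  "defset_mod \<nu> E r \<phi> =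
     {\<sigma> \<in> space (PiM (fv \<phi>) (\<lambda>_. \<nu>)). sat (space \<nu>) E r \<sigma> \<phi>}"

definition stone_mod :: "'a measure \<Rightarrow> ('a \<Rightarrow> 'a \<Rightarrow> bool) \<Rightarrow> 'a \<Rightarrow> fm \<Rightarrow> real" where
  "stone_mod \<nu> E r \<phi> =
     (if fv \<phi> = {} then (if sat (space \<nu>) E r (\<lambda>_. undefined) \<phi> then 1 else 0)
      else measure (PiM (fv \<phi>) (\<lambda>_. \<nu>)) (defset_mod \<nu> E r \<phi>))"

text \<open>A modeling: vertex set a standard Borel space (the Borel sets of a Polish space)
  with a probability measure, such that every first-order definable set is measurable.\<close>
definition is_modeling :: "('a::polish_space) measure \<Rightarrow> ('a \<Rightarrow> 'a \<Rightarrow> bool) \<Rightarrow> bool" where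
  "is_modeling \<nu> E \<longleftrightarrow> prob_space \<nu> \<and> sets \<nu> = sets borel \<and>
     (\<forall>\<phi>. rootfree \<phi> \<longrightarrow>
        defset_mod \<nu> E undefined \<phi> \<in> sets (PiM (fv \<phi>) (\<lambda>_. \<nu>)))"

definition FO_convergent :: "(nat \<Rightarrow> 'v set) \<Rightarrow> (nat \<Rightarrow> 'v \<Rightarrow> 'v \<Rightarrow> bool) \<Rightarrow> bool" where
  "FO_convergent V E \<longleftrightarrow>
     (\<forall>\<phi>. rootfree \<phi> \<longrightarrow> convergent (\<lambda>n. stone_fin (V n) (E n) undefined \<phi>))"

definition modeling_limit ::
  "(nat \<Rightarrow> 'v set) \<Rightarrow> (nat \<Rightarrow> 'v \<Rightarrow> 'v \<Rightarrow> bool) \<Rightarrow> ('a::polish_space) measure \<Rightarrow> ('a \<Rightarrow> 'a \<Rightarrow> bool) \<Rightarrow> bool" where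
  "modeling_limit V E \<nu> EL \<longleftrightarrow> is_modeling \<nu> EL \<and>
     (\<forall>\<phi>. rootfree \<phi> \<longrightarrow>
        (\<lambda>n. stone_fin (V n) (E n) undefined \<phi>) \<longlonglongrightarrow> stone_mod \<nu> EL undefined \<phi>)"

definition defset1 :: "'v set \<Rightarrow> ('v \<Rightarrow> 'v \<Rightarrow> bool) \<Rightarrow> fm \<Rightarrow> nat \<Rightarrow> 'v set" where
  "defset1 V E \<xi> x = {v \<in> V. sat V E undefined ((\<lambda>_. undefined)(x := v)) \<xi>}"

end

theory Submission
  imports Defs
begin

fun allvars :: "fm \<Rightarrow> nat set" where
  "allvars (Eq s t) = tvars s \<union> tvars t"
| "allvars (Adj s t) = tvars s \<union> tvars t"
| "allvars (Neg \<phi>) = allvars \<phi>"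
| "allvars (Conj \<phi> \<psi>) = allvars \<phi> \<union> allvars \<psi>"
| "allvars (Ex x \<phi>) = insert x (allvars \<phi>)"

lemma finite_tvars[simp]: "finite (tvars t)" by (cases t) auto
lemma finite_allvars[simp]: "finite (allvars \<phi>)" by (induction \<phi>) auto
lemma fv_allvars: "fv \<phi> \<subseteq> allvars \<phi>" by (induction \<phi>) auto
lemma finite_fv[simp]: "finite (fv \<phi>)" using fv_allvars finite_subset finite_allvars by blast

lemma tval_cong: "(\<forall>i\<in>tvars t. \<sigma> i = \<sigma>' i) \<Longrightarrow> tval r \<sigma> t = tval r \<sigma>' t"
  by (cases t) auto

lemma sat_cong: "(\<forall>i\<in>fv \<phi>. \<sigma> i = \<sigma>' i) \<Longrightarrow> sat V E r \<sigma> \<phi> = sat V E r \<sigma>' \<phi>"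
proof (induction \<phi> arbitrary: \<sigma> \<sigma>')
  case (Eq s t) then show ?case using tval_cong[of s \<sigma> \<sigma>' r] tval_cong[of t \<sigma> \<sigma>' r] by auto
next
  case (Adj s t) then show ?case using tval_cong[of s \<sigma> \<sigma>' r] tval_cong[of t \<sigma> \<sigma>' r] by auto
next
  case (Ex y \<phi>)
  have "\<And>v. sat V E r (\<sigma>(y:=v)) \<phi> = sat V E r (\<sigma>'(y:=v)) \<phi>"
    using Ex by (intro Ex.IH) auto
  then show ?case by simp
next
  case (Neg \<phi>) then show ?case by simp
next
  case (Conj a b)
  have "sat V E r \<sigma> a = sat V E r \<sigma>' a" "sat V E r \<sigma> b = sat V E r \<sigma>' b"
    using Conj.prems by (auto intro!: Conj.IH)
  then show ?case by simp
qed

lemma tval_rootfree: "rootfree_t t \<Longrightarrow> tval r \<sigma> t = tval r' \<sigma> t" by (cases t) auto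

lemma sat_rootfree: "rootfree \<phi> \<Longrightarrow> sat V E r \<sigma> \<phi> = sat V E r' \<sigma> \<phi>"
proof (induction \<phi> arbitrary: \<sigma>)
  case (Eq s t) then show ?case using tval_rootfree[of s r \<sigma> r'] tval_rootfree[of t r \<sigma> r'] by auto
next
  case (Adj s t) then show ?case using tval_rootfree[of s r \<sigma> r'] tval_rootfree[of t r \<sigma> r'] by auto
qed auto

fun subRt :: "nat \<Rightarrow> trm \<Rightarrow> trm" where
  "subRt z (Var i) = Var i" | "subRt z Root = Var z"

fun subR :: "nat \<Rightarrow> fm \<Rightarrow> fm" where
  "subR z (Eq s t) = Eq (subRt z s) (subRt z t)"
| "subR z (Adj s t) = Adj (subRt z s) (subRt z t)"
| "subR z (Neg \<phi>) = Neg (subR z \<phi>)"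
| "subR z (Conj \<phi> \<psi>) = Conj (subR z \<phi>) (subR z \<psi>)"
| "subR z (Ex x \<phi>) = Ex x (subR z \<phi>)"

lemma rootfree_subR: "rootfree (subR z \<phi>)"
proof (induction \<phi>)
  case (Eq s t) then show ?case by (cases s; cases t) auto
next
  case (Adj s t) then show ?case by (cases s; cases t) auto
qed auto

lemma tval_subRt: "\<sigma> z = r \<Longrightarrow> tval r' \<sigma> (subRt z t) = tval r \<sigma> t" by (cases t) auto

lemma sat_subR: "z \<notin> allvars \<phi> \<Longrightarrow> sat V E r' \<sigma> (subR z \<phi>) = sat V E (\<sigma> z) \<sigma> \<phi>"
proof (induction \<phi> arbitrary: \<sigma>)
  case (Ex y \<phi>)
  then have "y \<noteq> z" by auto
  then show ?case using Ex by auto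
qed (auto simp: tval_subRt)

lemma fv_subR: "fv (subR z \<phi>) \<subseteq> insert z (fv \<phi>)" "fv \<phi> \<subseteq> fv (subR z \<phi>)"
proof -
  have t: "tvars (subRt z t) \<subseteq> insert z (tvars t)" "tvars t \<subseteq> tvars (subRt z t)" for t
    by (cases t; auto)+
  show "fv (subR z \<phi>) \<subseteq> insert z (fv \<phi>)" by (induction \<phi>) (use t in auto)
  show "fv \<phi> \<subseteq> fv (subR z \<phi>)" by (induction \<phi>) (use t in auto)
qed

lemma allvars_subR: "allvars (subR z \<phi>) \<subseteq> insert z (allvars \<phi>)"
proof -
  have t: "tvars (subRt z t) \<subseteq> insert z (tvars t)" for t by (cases t; auto)
  show ?thesis by (induction \<phi>) (use t in auto)
qed

fun rent :: "(nat \<Rightarrow> nat) \<Rightarrow> trm \<Rightarrow> trm" where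
  "rent \<rho> (Var i) = Var (\<rho> i)" | "rent \<rho> Root = Root"

fun ren :: "(nat \<Rightarrow> nat) \<Rightarrow> fm \<Rightarrow> fm" where
  "ren \<rho> (Eq s t) = Eq (rent \<rho> s) (rent \<rho> t)"
| "ren \<rho> (Adj s t) = Adj (rent \<rho> s) (rent \<rho> t)"
| "ren \<rho> (Neg \<phi>) = Neg (ren \<rho> \<phi>)"
| "ren \<rho> (Conj \<phi> \<psi>) = Conj (ren \<rho> \<phi>) (ren \<rho> \<psi>)"
| "ren \<rho> (Ex x \<phi>) = Ex (\<rho> x) (ren \<rho> \<phi>)"

lemma tval_rent: "tval r \<sigma> (rent \<rho> t) = tval r (\<sigma> \<circ> \<rho>) t" by (cases t) auto

lemma sat_ren: "inj \<rho> \<Longrightarrow> sat V E r \<sigma> (ren \<rho> \<phi>) = sat V E r (\<sigma> \<circ> \<rho>) \<phi>"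
proof (induction \<phi> arbitrary: \<sigma>)
  case (Ex y \<phi>)
  have "(\<sigma>(\<rho> y := v)) \<circ> \<rho> = (\<sigma> \<circ> \<rho>)(y := v)" for v
    using Ex.prems by (auto simp: fun_eq_iff inj_def)
  then show ?case by (simp only: sat.simps ren.simps Ex.IH[OF Ex.prems])
qed (auto simp: tval_rent)

lemma fv_ren: "inj \<rho> \<Longrightarrow> fv (ren \<rho> \<phi>) = \<rho> ` fv \<phi>"
proof (induction \<phi>)
  case (Eq s t) then show ?case by (cases s; cases t) auto
next
  case (Adj s t) then show ?case by (cases s; cases t) auto
next
  case (Ex y \<phi>) then show ?case by (auto simp: inj_def)
qed (auto simp: image_Un)


definition Qf :: "fm \<Rightarrow> nat \<Rightarrow> fm \<Rightarrow> nat \<Rightarrow> fm" where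
  "Qf \<xi> x \<gamma> z = Conj (Ex x (Conj (Eq (Var x) (Var z)) \<xi>)) (subR z \<gamma>)"

definition nd :: "nat \<Rightarrow> nat list \<Rightarrow> fm" where
  "nd z ws = foldr (\<lambda>w acc. Conj (Neg (Eq (Var z) (Var w))) acc) ws (Eq (Var z) (Var z))"

fun DD :: "fm \<Rightarrow> nat \<Rightarrow> fm \<Rightarrow> nat \<Rightarrow> nat list \<Rightarrow> fm" where
  "DD \<xi> x \<gamma> b [] = Eq (Var b) (Var b)"
| "DD \<xi> x \<gamma> b (z # zs) = Conj (Conj (Qf \<xi> x \<gamma> z) (nd z zs)) (DD \<xi> x \<gamma> b zs)"

definition Theta :: "fm \<Rightarrow> nat \<Rightarrow> fm \<Rightarrow> nat \<Rightarrow> nat \<Rightarrow> fm" where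
  "Theta \<xi> x \<gamma> B t = foldr Ex [B..<B+t] (DD \<xi> x \<gamma> B [B..<B+t])"

lemma sat_nd: "sat V E r \<sigma> (nd z ws) \<longleftrightarrow> (\<forall>w\<in>set ws. \<sigma> z \<noteq> \<sigma> w)"
  unfolding nd_def by (induction ws) auto

lemma fv_nd: "fv (nd z ws) = insert z (set ws)"
  unfolding nd_def by (induction ws) auto

lemma rootfree_nd: "rootfree (nd z ws)"
  unfolding nd_def by (induction ws) auto

lemma sat_Qf:
  assumes "z \<notin> allvars \<gamma>" "z \<noteq> x" "rootfree \<xi>" "fv \<xi> = {x}"
  shows "sat V E r \<sigma> (Qf \<xi> x \<gamma> z) \<longleftrightarrow> \<sigma> z \<in> defset1 V E \<xi> x \<and> sat V E (\<sigma> z) \<sigma> \<gamma>"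
proof -
  have "sat V E r \<sigma> (Ex x (Conj (Eq (Var x) (Var z)) \<xi>)) \<longleftrightarrow> \<sigma> z \<in> V \<and> sat V E r (\<sigma>(x := \<sigma> z)) \<xi>"
    using assms(2) by auto
  also have "sat V E r (\<sigma>(x := \<sigma> z)) \<xi> = sat V E undefined ((\<lambda>_. undefined)(x := \<sigma> z)) \<xi>"
  proof -
    have "sat V E r (\<sigma>(x:=\<sigma> z)) \<xi> = sat V E r ((\<lambda>_. undefined)(x:=\<sigma> z)) \<xi>"
      by (rule sat_cong) (use assms(4) in auto)
    also have "\<dots> = sat V E undefined ((\<lambda>_. undefined)(x:=\<sigma> z)) \<xi>" by (rule sat_rootfree[OF assms(3)])
    finally show ?thesis .
  qed
  finally have 1: "sat V E r \<sigma> (Ex x (Conj (Eq (Var x) (Var z)) \<xi>)) \<longleftrightarrow> \<sigma> z \<in> defset1 V E \<xi> x"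
    unfolding defset1_def by simp
  show ?thesis unfolding Qf_def sat.simps(4) 1 sat_subR[OF assms(1)] ..
qed

lemma fv_Qf:
  assumes "fv \<xi> = {x}" "z \<noteq> x"
  shows "fv (Qf \<xi> x \<gamma> z) \<subseteq> insert z (fv \<gamma>)" "fv \<gamma> \<subseteq> fv (Qf \<xi> x \<gamma> z)"
  using assms fv_subR[where z=z and \<phi>=\<gamma>] unfolding Qf_def by auto

lemma rootfree_Qf: "rootfree \<xi> \<Longrightarrow> rootfree (Qf \<xi> x \<gamma> z)"
  unfolding Qf_def using rootfree_subR by simp

lemma sat_DD: "sat V E r \<sigma> (DD \<xi> x \<gamma> b zs) \<longleftrightarrow>
    (\<forall>z\<in>set zs. sat V E r \<sigma> (Qf \<xi> x \<gamma> z)) \<and> distinct (map \<sigma> zs)"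
  by (induction zs) (auto simp: sat_nd)

lemma rootfree_DD: "rootfree \<xi> \<Longrightarrow> rootfree (DD \<xi> x \<gamma> b zs)"
  by (induction zs) (auto simp: rootfree_Qf rootfree_nd)

lemma fv_DD:
  assumes "fv \<xi> = {x}" "x \<notin> set zs"
  shows "fv (DD \<xi> x \<gamma> b zs) \<subseteq> insert b (set zs \<union> fv \<gamma>)"
    "zs \<noteq> [] \<Longrightarrow> fv \<gamma> \<subseteq> fv (DD \<xi> x \<gamma> b zs)"
  using assms
proof (induction zs)
  case (Cons z zs)
  { case 1
    then have "z \<noteq> x" "x \<notin> set zs" by auto
    then show ?case using Cons.IH(1)[OF 1(1)] fv_Qf[OF 1(1), of z \<gamma>] by (auto simp: fv_nd) }
  { case 2
    then have "z \<noteq> x" "x \<notin> set zs" by auto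
    then show ?case using fv_Qf[OF 2(2), of z \<gamma>] by (auto simp: fv_nd) }
qed auto

lemma sat_exs: "sat V E r \<sigma> (foldr Ex zs \<phi>) \<longleftrightarrow>
   (\<exists>\<tau>. (\<forall>i. i \<notin> set zs \<longrightarrow> \<tau> i = \<sigma> i) \<and> (\<forall>i\<in>set zs. \<tau> i \<in> V) \<and> sat V E r \<tau> \<phi>)"
proof (induction zs arbitrary: \<sigma>)
  case Nil
  have "(\<forall>i. \<tau> i = \<sigma> i) \<longleftrightarrow> \<tau> = \<sigma>" for \<tau> :: "nat \<Rightarrow> 'a" by auto
  then show ?case by simp
next
  case (Cons z zs)
  show ?case
  proof
    assume "sat V E r \<sigma> (foldr Ex (z # zs) \<phi>)"
    then obtain v where v: "v \<in> V" "sat V E r (\<sigma>(z:=v)) (foldr Ex zs \<phi>)" by auto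
    then obtain \<tau> where t: "\<forall>i. i \<notin> set zs \<longrightarrow> \<tau> i = (\<sigma>(z:=v)) i" "\<forall>i\<in>set zs. \<tau> i \<in> V" "sat V E r \<tau> \<phi>"
      using Cons.IH by blast
    show "\<exists>\<tau>. (\<forall>i. i \<notin> set (z # zs) \<longrightarrow> \<tau> i = \<sigma> i) \<and> (\<forall>i\<in>set (z # zs). \<tau> i \<in> V) \<and> sat V E r \<tau> \<phi>"
    proof (rule exI[of _ \<tau>], intro conjI)
      show "\<forall>i. i \<notin> set (z # zs) \<longrightarrow> \<tau> i = \<sigma> i" using t(1) by auto
      show "\<forall>i\<in>set (z # zs). \<tau> i \<in> V"
      proof
        fix i assume i: "i \<in> set (z # zs)"
        show "\<tau> i \<in> V"
        proof (cases "i \<in> set zs")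
          case True with t(2) show ?thesis by blast
        next
          case False
          then have "i = z" using i by simp
          with False t(1) v(1) show ?thesis by simp
        qed
      qed
      show "sat V E r \<tau> \<phi>" by (rule t(3))
    qed
  next
    assume "\<exists>\<tau>. (\<forall>i. i \<notin> set (z # zs) \<longrightarrow> \<tau> i = \<sigma> i) \<and> (\<forall>i\<in>set (z # zs). \<tau> i \<in> V) \<and> sat V E r \<tau> \<phi>"
    then obtain \<tau> where t: "\<forall>i. i \<notin> set (z # zs) \<longrightarrow> \<tau> i = \<sigma> i" "\<forall>i\<in>set (z # zs). \<tau> i \<in> V" "sat V E r \<tau> \<phi>"
      by blast
    have a: "\<forall>i. i \<notin> set zs \<longrightarrow> \<tau> i = (\<sigma>(z := \<tau> z)) i" using t(1) by auto
    have b: "\<forall>i\<in>set zs. \<tau> i \<in> V" using t(2) by simp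
    have "sat V E r (\<sigma>(z := \<tau> z)) (foldr Ex zs \<phi>)"
      unfolding Cons.IH using a b t(3) by blast
    then show "sat V E r \<sigma> (foldr Ex (z # zs) \<phi>)" using t(2) by auto
  qed
qed

lemma fv_exs: "fv (foldr Ex zs \<phi>) = fv \<phi> - set zs"
  by (induction zs) auto

lemma rootfree_exs: "rootfree (foldr Ex zs \<phi>) = rootfree \<phi>"
  by (induction zs) auto

lemma exists_distinct_iff:
  assumes "distinct zs" "finite T"
  shows "(\<exists>\<tau>. (\<forall>i. i \<notin> set zs \<longrightarrow> \<tau> i = \<sigma> i) \<and> (\<forall>z\<in>set zs. \<tau> z \<in> T) \<and> distinct (map \<tau> zs))
    \<longleftrightarrow> length zs \<le> card T"
proof
  assume "\<exists>\<tau>. (\<forall>i. i \<notin> set zs \<longrightarrow> \<tau> i = \<sigma> i) \<and> (\<forall>z\<in>set zs. \<tau> z \<in> T) \<and> distinct (map \<tau> zs)"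
  then obtain \<tau> where t: "\<forall>z\<in>set zs. \<tau> z \<in> T" "distinct (map \<tau> zs)" by blast
  have "length zs = card (set (map \<tau> zs))" using t(2) distinct_card by fastforce
  also have "\<dots> \<le> card T" using t(1) assms(2) by (intro card_mono) auto
  finally show "length zs \<le> card T" .
next
  assume "length zs \<le> card T"
  then obtain T' where T': "T' \<subseteq> T" "card T' = length zs"
    by (meson obtain_subset_with_card_n)
  have "finite T'" using T' assms(2) finite_subset by blast
  then obtain h where h: "bij_betw h (set zs) T'"
    using finite_same_card_bij[of "set zs" T'] T' distinct_card[OF assms(1)] by auto
  define \<tau> where "\<tau> i = (if i \<in> set zs then h i else \<sigma> i)" for i
  have "map \<tau> zs = map h zs" unfolding \<tau>_def by auto
  moreover have "distinct (map h zs)"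
    using h assms(1) by (simp add: distinct_map bij_betw_def)
  ultimately show "\<exists>\<tau>. (\<forall>i. i \<notin> set zs \<longrightarrow> \<tau> i = \<sigma> i) \<and> (\<forall>z\<in>set zs. \<tau> z \<in> T) \<and> distinct (map \<tau> zs)"
  proof -
    have "\<forall>z\<in>set zs. \<tau> z \<in> T" using h T'(1) unfolding \<tau>_def bij_betw_def by auto
    moreover have "\<forall>i. i \<notin> set zs \<longrightarrow> \<tau> i = \<sigma> i" by (simp add: \<tau>_def)
    ultimately show ?thesis using \<open>map \<tau> zs = map h zs\<close> \<open>distinct (map h zs)\<close> by metis
  qed
qed

lemma sat_Theta:
  assumes xi: "rootfree \<xi>" "fv \<xi> = {x}" and B: "x < B" "\<forall>i\<in>allvars \<gamma>. i < B"
    and fin: "finite (defset1 V E \<xi> x)"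
  shows "sat V E r \<sigma> (Theta \<xi> x \<gamma> B t) \<longleftrightarrow> t \<le> card {s \<in> defset1 V E \<xi> x. sat V E s \<sigma> \<gamma>}"
proof -
  let ?zs = "[B..<B+t]"
  let ?T = "{s \<in> defset1 V E \<xi> x. sat V E s \<sigma> \<gamma>}"
  have zs: "z \<notin> allvars \<gamma>" "z \<noteq> x" if "z \<in> set ?zs" for z using that B by auto
  have eq: "sat V E s \<tau> \<gamma> = sat V E s \<sigma> \<gamma>" if "\<forall>i. i \<notin> set ?zs \<longrightarrow> \<tau> i = \<sigma> i" for \<tau> s
  proof (rule sat_cong, rule ballI)
    fix i assume "i \<in> fv \<gamma>"
    then have "i < B" using fv_allvars[of \<gamma>] B(2) by blast
    then have "i \<notin> set ?zs" by simp
    then show "\<tau> i = \<sigma> i" using that by blast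
  qed
  have "sat V E r \<sigma> (Theta \<xi> x \<gamma> B t) \<longleftrightarrow>
     (\<exists>\<tau>. (\<forall>i. i \<notin> set ?zs \<longrightarrow> \<tau> i = \<sigma> i) \<and> (\<forall>i\<in>set ?zs. \<tau> i \<in> V) \<and>
        (\<forall>z\<in>set ?zs. \<tau> z \<in> defset1 V E \<xi> x \<and> sat V E (\<tau> z) \<tau> \<gamma>) \<and> distinct (map \<tau> ?zs))"
  proof -
    have Qall: "(\<forall>z\<in>set ?zs. sat V E r \<tau> (Qf \<xi> x \<gamma> z)) \<longleftrightarrow>
       (\<forall>z\<in>set ?zs. \<tau> z \<in> defset1 V E \<xi> x \<and> sat V E (\<tau> z) \<tau> \<gamma>)" for \<tau>
    proof (rule ball_cong[OF refl])
      fix z assume z: "z \<in> set ?zs"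
      show "sat V E r \<tau> (Qf \<xi> x \<gamma> z) \<longleftrightarrow> \<tau> z \<in> defset1 V E \<xi> x \<and> sat V E (\<tau> z) \<tau> \<gamma>"
        by (rule sat_Qf[OF zs(1)[OF z] zs(2)[OF z] xi])
    qed
    show ?thesis unfolding Theta_def sat_exs sat_DD Qall by (rule refl)
  qed
  also have "\<dots> \<longleftrightarrow> (\<exists>\<tau>. (\<forall>i. i \<notin> set ?zs \<longrightarrow> \<tau> i = \<sigma> i) \<and> (\<forall>z\<in>set ?zs. \<tau> z \<in> ?T) \<and> distinct (map \<tau> ?zs))"
  proof -
    have "((\<forall>i\<in>set ?zs. \<tau> i \<in> V) \<and> (\<forall>z\<in>set ?zs. \<tau> z \<in> defset1 V E \<xi> x \<and> sat V E (\<tau> z) \<tau> \<gamma>))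
       \<longleftrightarrow> (\<forall>z\<in>set ?zs. \<tau> z \<in> ?T)" if "\<forall>i. i \<notin> set ?zs \<longrightarrow> \<tau> i = \<sigma> i" for \<tau>
      using eq[OF that] by (auto simp: defset1_def)
    then show ?thesis by blast
  qed
  also have "\<dots> \<longleftrightarrow> length ?zs \<le> card ?T"
    using fin by (intro exists_distinct_iff) auto
  finally show ?thesis by simp
qed

lemma fv_Theta:
  assumes xi: "fv \<xi> = {x}" and B: "x < B" "\<forall>i\<in>allvars \<gamma>. i < B" and t: "t \<ge> 1"
  shows "fv (Theta \<xi> x \<gamma> B t) = fv \<gamma>"
proof -
  let ?zs = "[B..<B+t]"
  have xz: "x \<notin> set ?zs" using B by auto
  have ne: "?zs \<noteq> []" using t by simp
  have 1: "fv (DD \<xi> x \<gamma> B ?zs) \<subseteq> insert B (set ?zs \<union> fv \<gamma>)" "fv \<gamma> \<subseteq> fv (DD \<xi> x \<gamma> B ?zs)"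
    using fv_DD(1)[OF xi xz] fv_DD(2)[OF xi xz ne] by auto
  have "fv \<gamma> \<inter> set ?zs = {}" using B fv_allvars[of \<gamma>] by fastforce
  moreover have "B \<in> set ?zs" using t by auto
  ultimately have "fv (DD \<xi> x \<gamma> B ?zs) - set ?zs = fv \<gamma>" using 1 by blast
  then show ?thesis unfolding Theta_def fv_exs .
qed

lemma rootfree_Theta: "rootfree \<xi> \<Longrightarrow> rootfree (Theta \<xi> x \<gamma> B t)"
  unfolding Theta_def rootfree_exs by (rule rootfree_DD)


lemma card_filter_sum: "finite A \<Longrightarrow> real (card {x\<in>A. P x}) = (\<Sum>x\<in>A. if P x then 1 else 0)"
proof -
  assume "finite A"
  then have "(\<Sum>x\<in>A. if P x then 1 else 0 :: real) = (\<Sum>x\<in>{x\<in>A. P x}. 1)"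
    by (simp add: sum.If_cases Int_def conj_commute)
  then show ?thesis by simp
qed

lemma count_levels: "c \<le> N \<Longrightarrow> card {t\<in>{1..N}. t \<le> c} = (c::nat)"
proof -
  assume "c \<le> N"
  then have "{t\<in>{1..N}. t \<le> c} = {1..c}" by auto
  then show ?thesis by simp
qed

lemma count_swap:
  assumes "finite P" "finite S" "card S = N"
  shows "(\<Sum>s\<in>S. real (card {\<sigma>\<in>P. R s \<sigma>})) = (\<Sum>t\<in>{1..N}. real (card {\<sigma>\<in>P. t \<le> card {s\<in>S. R s \<sigma>}}))"
proof -
  have "(\<Sum>s\<in>S. real (card {\<sigma>\<in>P. R s \<sigma>})) = (\<Sum>s\<in>S. \<Sum>\<sigma>\<in>P. if R s \<sigma> then 1 else 0)"
    by (rule sum.cong[OF refl], rule card_filter_sum[OF assms(1)])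
  also have "\<dots> = (\<Sum>\<sigma>\<in>P. \<Sum>s\<in>S. if R s \<sigma> then 1 else 0)" by (rule sum.swap)
  also have "\<dots> = (\<Sum>\<sigma>\<in>P. real (card {s\<in>S. R s \<sigma>}))"
    by (rule sum.cong[OF refl], rule card_filter_sum[OF assms(2), symmetric])
  also have "\<dots> = (\<Sum>\<sigma>\<in>P. real (card {t\<in>{1..N}. t \<le> card {s\<in>S. R s \<sigma>}}))"
  proof (rule sum.cong[OF refl])
    fix \<sigma> have "card {s\<in>S. R s \<sigma>} \<le> card S" by (rule card_mono) (use assms in auto)
    then have "card {s\<in>S. R s \<sigma>} \<le> N" using assms(3) by simp
    then have e: "card {t\<in>{1..N}. t \<le> card {s\<in>S. R s \<sigma>}} = card {s\<in>S. R s \<sigma>}" by (rule count_levels)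
    show "real (card {s\<in>S. R s \<sigma>}) = real (card {t\<in>{1..N}. t \<le> card {s\<in>S. R s \<sigma>}})"
      by (simp only: e)
  qed
  also have "\<dots> = (\<Sum>\<sigma>\<in>P. \<Sum>t\<in>{1..N}. if t \<le> card {s\<in>S. R s \<sigma>} then 1 else 0)"
    by (rule sum.cong[OF refl], rule card_filter_sum) simp
  also have "\<dots> = (\<Sum>t\<in>{1..N}. \<Sum>\<sigma>\<in>P. if t \<le> card {s\<in>S. R s \<sigma>} then 1 else 0)" by (rule sum.swap)
  also have "\<dots> = (\<Sum>t\<in>{1..N}. real (card {\<sigma>\<in>P. t \<le> card {s\<in>S. R s \<sigma>}}))"
    by (rule sum.cong[OF refl], rule card_filter_sum[OF assms(1), symmetric])
  finally show ?thesis .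
qed

lemma fin_count:
  assumes V: "finite V" and F: "fv \<gamma> \<noteq> {}"
    and xi: "rootfree \<xi>" "fv \<xi> = {x}" and B: "x < B" "\<forall>i\<in>allvars \<gamma>. i < B"
    and N: "card (defset1 V E \<xi> x) = N"
  shows "(\<Sum>s\<in>defset1 V E \<xi> x. stone_fin V E s \<gamma>) = (\<Sum>t\<in>{1..N}. stone_fin V E undefined (Theta \<xi> x \<gamma> B t))"
proof -
  let ?P = "PiE (fv \<gamma>) (\<lambda>_. V)"
  let ?S = "defset1 V E \<xi> x"
  let ?d = "real (card V) ^ card (fv \<gamma>)"
  have finP: "finite ?P" using V by (simp add: finite_PiE)
  have finS: "finite ?S" using V unfolding defset1_def by simp
  have "(\<Sum>s\<in>?S. stone_fin V E s \<gamma>) = (\<Sum>s\<in>?S. real (card {\<sigma>\<in>?P. sat V E s \<sigma> \<gamma>})) / ?d"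
    unfolding stone_fin_def using F by (simp add: sum_divide_distrib)
  also have "\<dots> = (\<Sum>t\<in>{1..N}. real (card {\<sigma>\<in>?P. t \<le> card {s\<in>?S. sat V E s \<sigma> \<gamma>}})) / ?d"
    using count_swap[OF finP finS N] by simp
  also have "\<dots> = (\<Sum>t\<in>{1..N}. real (card {\<sigma>\<in>?P. sat V E undefined \<sigma> (Theta \<xi> x \<gamma> B t)}) / ?d)"
    unfolding sat_Theta[OF xi B finS] by (simp add: sum_divide_distrib)
  also have "\<dots> = (\<Sum>t\<in>{1..N}. stone_fin V E undefined (Theta \<xi> x \<gamma> B t))"
  proof (rule sum.cong[OF refl])
    fix t assume "t \<in> {1..N}"
    then have "fv (Theta \<xi> x \<gamma> B t) = fv \<gamma>" using fv_Theta[OF xi(2) B] by auto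
    then show "real (card {\<sigma>\<in>?P. sat V E undefined \<sigma> (Theta \<xi> x \<gamma> B t)}) / ?d = stone_fin V E undefined (Theta \<xi> x \<gamma> B t)"
      unfolding stone_fin_def using F by simp
  qed
  finally show ?thesis .
qed

lemma space_modeling: "is_modeling \<nu> EL \<Longrightarrow> space \<nu> = UNIV"
  unfolding is_modeling_def using sets_eq_imp_space_eq by fastforce

lemma meas_rooted:
  assumes M: "is_modeling \<nu> EL"
  shows "defset_mod \<nu> EL r \<gamma> \<in> sets (PiM (fv \<gamma>) (\<lambda>_. \<nu>))"
proof -
  obtain z where z: "z \<notin> allvars \<gamma>" using ex_new_if_finite[OF infinite_UNIV_nat finite_allvars] by blast
  let ?G = "fv (subR z \<gamma>)"
  let ?F = "fv \<gamma>"
  have D: "defset_mod \<nu> EL undefined (subR z \<gamma>) \<in> sets (PiM ?G (\<lambda>_. \<nu>))"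
    using M rootfree_subR unfolding is_modeling_def by blast
  define g where "g \<sigma> = (\<lambda>i\<in>?G. (\<sigma>(z:=r)) i)" for \<sigma> :: "nat \<Rightarrow> 'a"
  have sp: "space \<nu> = UNIV" by (rule space_modeling[OF M])
  have gm: "g \<in> measurable (PiM ?F (\<lambda>_. \<nu>)) (PiM ?G (\<lambda>_. \<nu>))"
    unfolding g_def
  proof (rule measurable_restrict)
    fix i assume i: "i \<in> ?G"
    show "(\<lambda>\<sigma>. (\<sigma>(z := r)) i) \<in> measurable (PiM ?F (\<lambda>_. \<nu>)) \<nu>"
    proof (cases "i = z")
      case True then show ?thesis using sp by simp
    next
      case False
      then have "i \<in> ?F" using i fv_subR(1)[of z \<gamma>] by auto
      then show ?thesis using False by simp
    qed
  qed
  have "g -` defset_mod \<nu> EL undefined (subR z \<gamma>) \<inter> space (PiM ?F (\<lambda>_. \<nu>)) \<in> sets (PiM ?F (\<lambda>_. \<nu>))"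
    using measurable_sets[OF gm D] .
  moreover have "g -` defset_mod \<nu> EL undefined (subR z \<gamma>) \<inter> space (PiM ?F (\<lambda>_. \<nu>)) = defset_mod \<nu> EL r \<gamma>"
  proof -
    have "sat (space \<nu>) EL undefined (g \<sigma>) (subR z \<gamma>) = sat (space \<nu>) EL r \<sigma> \<gamma>" for \<sigma>
    proof -
      have "sat (space \<nu>) EL undefined (g \<sigma>) (subR z \<gamma>) = sat (space \<nu>) EL undefined (\<sigma>(z:=r)) (subR z \<gamma>)"
        unfolding g_def by (rule sat_cong) auto
      also have "\<dots> = sat (space \<nu>) EL r (\<sigma>(z:=r)) \<gamma>" using sat_subR[OF z, of "space \<nu>" EL undefined "\<sigma>(z:=r)"] by simp
      also have "\<dots> = sat (space \<nu>) EL r \<sigma> \<gamma>"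
        using z fv_allvars[of \<gamma>] by (intro sat_cong) auto
      finally show ?thesis .
    qed
    moreover have "g \<sigma> \<in> space (PiM ?G (\<lambda>_. \<nu>))" if "\<sigma> \<in> space (PiM ?F (\<lambda>_. \<nu>))" for \<sigma>
      using measurable_space[OF gm that] .
    ultimately show ?thesis unfolding defset_mod_def by auto
  qed
  ultimately show ?thesis by simp
qed


lemma prob_PiM_nu: "is_modeling \<nu> EL \<Longrightarrow> prob_space (PiM I (\<lambda>_. \<nu>))"
  unfolding is_modeling_def by (intro prob_space_PiM) auto

lemma mod_count:
  assumes M: "is_modeling \<nu> EL" and F: "fv \<gamma> \<noteq> {}"
    and xi: "rootfree \<xi>" "fv \<xi> = {x}" and B: "x < B" "\<forall>i\<in>allvars \<gamma>. i < B"
    and fin: "finite (defset1 (space \<nu>) EL \<xi> x)"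
    and N: "card (defset1 (space \<nu>) EL \<xi> x) = N"
  shows "(\<Sum>r\<in>defset1 (space \<nu>) EL \<xi> x. stone_mod \<nu> EL r \<gamma>)
       = (\<Sum>t\<in>{1..N}. stone_mod \<nu> EL undefined (Theta \<xi> x \<gamma> B t))"
proof -
  let ?M = "PiM (fv \<gamma>) (\<lambda>_. \<nu>)"
  let ?S = "defset1 (space \<nu>) EL \<xi> x"
  let ?A = "\<lambda>r. defset_mod \<nu> EL r \<gamma>"
  let ?B = "\<lambda>t. defset_mod \<nu> EL undefined (Theta \<xi> x \<gamma> B t)"
  let ?c = "\<lambda>\<sigma>. card {r\<in>?S. sat (space \<nu>) EL r \<sigma> \<gamma>}"
  interpret P: prob_space ?M by (rule prob_PiM_nu[OF M])
  have fvT: "fv (Theta \<xi> x \<gamma> B t) = fv \<gamma>" if "t \<in> {1..N}" for t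
    using fv_Theta[OF xi(2) B] that by auto
  have Am: "?A r \<in> sets ?M" for r by (rule meas_rooted[OF M])
  have Bm: "?B t \<in> sets ?M" if "t \<in> {1..N}" for t
    using M rootfree_Theta[OF xi(1)] fvT[OF that] unfolding is_modeling_def by metis
  have "(\<Sum>r\<in>?S. stone_mod \<nu> EL r \<gamma>) = (\<Sum>r\<in>?S. P.prob (?A r))"
    unfolding stone_mod_def using F by simp
  also have "\<dots> = (\<Sum>r\<in>?S. integral\<^sup>L ?M (indicator (?A r)))"
    using Am by (simp add: Int_absorb2 sets.sets_into_space)
  also have "\<dots> = integral\<^sup>L ?M (\<lambda>\<sigma>. \<Sum>r\<in>?S. indicator (?A r) \<sigma>)"
    by (rule Bochner_Integration.integral_sum[where I="?S" and M="?M" and f="\<lambda>r. indicator (?A r)", symmetric])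
       (auto intro!: integrable_real_indicator Am simp: less_top[symmetric] P.emeasure_finite)
  also have "\<dots> = integral\<^sup>L ?M (\<lambda>\<sigma>. \<Sum>t\<in>{1..N}. indicator (?B t) \<sigma>)"
  proof (rule Bochner_Integration.integral_cong[OF refl])
    fix \<sigma> assume \<sigma>: "\<sigma> \<in> space ?M"
    have "(\<Sum>r\<in>?S. indicator (?A r) \<sigma>) = (\<Sum>r\<in>?S. if sat (space \<nu>) EL r \<sigma> \<gamma> then 1 else 0 :: real)"
      using \<sigma> by (intro sum.cong) (auto simp: defset_mod_def indicator_def)
    also have "\<dots> = real (?c \<sigma>)" using fin by (simp add: card_filter_sum)
    also have "\<dots> = real (card {t\<in>{1..N}. t \<le> ?c \<sigma>})"
    proof -
      have "?c \<sigma> \<le> card ?S" by (rule card_mono) (use fin in auto)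
      then have "?c \<sigma> \<le> N" using N by simp
      then have e: "card {t\<in>{1..N}. t \<le> ?c \<sigma>} = ?c \<sigma>" by (rule count_levels)
      show ?thesis by (simp only: e)
    qed
    also have "\<dots> = (\<Sum>t\<in>{1..N}. if t \<le> ?c \<sigma> then 1 else 0)" by (rule card_filter_sum) simp
    also have "\<dots> = (\<Sum>t\<in>{1..N}. indicator (?B t) \<sigma>)"
    proof (intro sum.cong[OF refl])
      fix t assume t: "t \<in> {1..N}"
      have "\<sigma> \<in> ?B t \<longleftrightarrow> t \<le> ?c \<sigma>"
        using \<sigma> fvT[OF t] sat_Theta[OF xi B fin] unfolding defset_mod_def by auto
      then show "(if t \<le> ?c \<sigma> then 1 else 0) = indicator (?B t) \<sigma>" by (auto simp: indicator_def)
    qed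
    finally show "(\<Sum>r\<in>?S. indicator (?A r) \<sigma>) = (\<Sum>t\<in>{1..N}. indicator (?B t) \<sigma> :: real)" .
  qed
  also have "\<dots> = (\<Sum>t\<in>{1..N}. integral\<^sup>L ?M (indicator (?B t)))"
    by (rule Bochner_Integration.integral_sum[where I="{1..N}" and M="?M" and f="\<lambda>t. indicator (?B t)"])
       (auto intro!: integrable_real_indicator Bm simp: less_top[symmetric] P.emeasure_finite)
  also have "\<dots> = (\<Sum>t\<in>{1..N}. stone_mod \<nu> EL undefined (Theta \<xi> x \<gamma> B t))"
  proof (rule sum.cong[OF refl])
    fix t assume t: "t \<in> {1..N}"
    show "integral\<^sup>L ?M (indicator (?B t)) = stone_mod \<nu> EL undefined (Theta \<xi> x \<gamma> B t)"
      unfolding stone_mod_def using F fvT[OF t] Bm[OF t] by (simp add: Int_absorb2 sets.sets_into_space)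
  qed
  finally show ?thesis .
qed


definition shK :: "fm \<Rightarrow> nat" where "shK \<alpha> = Suc (Max (insert 0 (fv \<alpha>)))"

definition pconj :: "fm \<Rightarrow> fm \<Rightarrow> fm" where
  "pconj \<alpha> \<beta> = Conj \<alpha> (ren (\<lambda>i. i + shK \<alpha>) \<beta>)"

lemma inj_sh: "inj (\<lambda>i::nat. i + K)" by (auto simp: inj_def)

lemma shK_gt: "i \<in> fv \<alpha> \<Longrightarrow> i < shK \<alpha>"
proof -
  assume i: "i \<in> fv \<alpha>"
  have "i \<le> Max (insert 0 (fv \<alpha>))" by (rule Max_ge) (use i in auto)
  then show ?thesis unfolding shK_def by simp
qed

lemma fv_pconj: "fv (pconj \<alpha> \<beta>) = fv \<alpha> \<union> (\<lambda>i. i + shK \<alpha>) ` fv \<beta>"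
  unfolding pconj_def by (simp add: fv_ren[OF inj_sh])

lemma disj_pconj: "fv \<alpha> \<inter> (\<lambda>i. i + shK \<alpha>) ` fv \<beta> = {}"
  using shK_gt[of _ \<alpha>] by fastforce

lemma card_pconj: "card (fv (pconj \<alpha> \<beta>)) = card (fv \<alpha>) + card (fv \<beta>)"
  unfolding fv_pconj using disj_pconj[of \<alpha> \<beta>]
  by (simp add: card_Un_disjoint card_image inj_on_def)

lemma fin_pconj:
  assumes A: "fv \<alpha> \<noteq> {}" and Bn: "fv \<beta> \<noteq> {}"
  shows "stone_fin V E r (pconj \<alpha> \<beta>) = stone_fin V E r \<alpha> * stone_fin V E r \<beta>"
proof -
  let ?K = "shK \<alpha>"
  let ?\<rho> = "\<lambda>i::nat. i + ?K"
  let ?A = "fv \<alpha>" let ?B = "fv \<beta>" let ?B' = "?\<rho> ` fv \<beta>"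
  have disj: "?A \<inter> ?B' = {}" by (rule disj_pconj)
  let ?L = "{\<sigma> \<in> PiE (?A \<union> ?B') (\<lambda>_. V). sat V E r \<sigma> (pconj \<alpha> \<beta>)}"
  let ?RA = "{\<sigma> \<in> PiE ?A (\<lambda>_. V). sat V E r \<sigma> \<alpha>}"
  let ?RB = "{\<sigma> \<in> PiE ?B (\<lambda>_. V). sat V E r \<sigma> \<beta>}"
  have satp: "sat V E r \<sigma> (pconj \<alpha> \<beta>) \<longleftrightarrow> sat V E r \<sigma> \<alpha> \<and> sat V E r (\<sigma> \<circ> ?\<rho>) \<beta>" for \<sigma>
    unfolding pconj_def by (simp add: sat_ren[OF inj_sh])
  define f where "f \<sigma> = (restrict \<sigma> ?A, restrict (\<sigma> \<circ> ?\<rho>) ?B)" for \<sigma> :: "nat \<Rightarrow> 'a"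
  define g where "g p = (\<lambda>i. if i \<in> ?A then fst p i else if i \<in> ?B' then snd p (i - ?K) else undefined)"
    for p :: "(nat \<Rightarrow> 'a) \<times> (nat \<Rightarrow> 'a)"
  have bij: "bij_betw f ?L (?RA \<times> ?RB)"
  proof (rule bij_betw_byWitness)
    show "\<forall>\<sigma>\<in>?L. g (f \<sigma>) = \<sigma>"
    proof
      fix \<sigma> assume s: "\<sigma> \<in> ?L"
      show "g (f \<sigma>) = \<sigma>"
      proof
        fix i show "g (f \<sigma>) i = \<sigma> i"
          using s disj by (auto simp: g_def f_def PiE_def extensional_def)
      qed
    qed
    show "\<forall>p\<in>?RA \<times> ?RB. f (g p) = p"
    proof
      fix p assume p: "p \<in> ?RA \<times> ?RB"
      obtain a b where ab: "p = (a, b)" by (cases p)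
      have "restrict (g p) ?A = a" using p ab by (auto simp: g_def PiE_def extensional_def)
      moreover have "restrict (g p \<circ> ?\<rho>) ?B = b"
      proof
        fix j show "restrict (g p \<circ> ?\<rho>) ?B j = b j"
          using p ab disj by (auto simp: g_def PiE_def extensional_def)
      qed
      ultimately show "f (g p) = p" using ab by (simp add: f_def)
    qed
    show "f ` ?L \<subseteq> ?RA \<times> ?RB"
    proof
      fix q assume "q \<in> f ` ?L"
      then obtain \<sigma> where s: "\<sigma> \<in> ?L" and q: "q = f \<sigma>" by blast
      have "restrict \<sigma> ?A \<in> ?RA"
        using s satp[of \<sigma>] sat_cong[of \<alpha> "restrict \<sigma> ?A" \<sigma>] by auto
      moreover have "restrict (\<sigma> \<circ> ?\<rho>) ?B \<in> ?RB"
        using s satp[of \<sigma>] sat_cong[of \<beta> "restrict (\<sigma> \<circ> ?\<rho>) ?B" "\<sigma> \<circ> ?\<rho>"] by (auto simp: PiE_iff)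
      ultimately show "q \<in> ?RA \<times> ?RB" using q f_def by simp
    qed
    show "g ` (?RA \<times> ?RB) \<subseteq> ?L"
    proof
      fix q assume "q \<in> g ` (?RA \<times> ?RB)"
      then obtain a b where ab: "a \<in> ?RA" "b \<in> ?RB" and q: "q = g (a, b)" by blast
      have "q \<in> PiE (?A \<union> ?B') (\<lambda>_. V)" using ab q by (auto simp: g_def PiE_iff extensional_def)
      moreover have "sat V E r q \<alpha>"
        using ab q sat_cong[of \<alpha> q a] by (auto simp: g_def)
      moreover have "sat V E r (q \<circ> ?\<rho>) \<beta>"
      proof -
        have "\<forall>i\<in>fv \<beta>. (q \<circ> ?\<rho>) i = b i"
        proof
          fix i assume i: "i \<in> fv \<beta>"
          then have "i + ?K \<notin> ?A" using disj by blast
          moreover have "i + ?K \<in> ?B'" using i by blast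
          ultimately show "(q \<circ> ?\<rho>) i = b i" using q by (simp add: g_def)
        qed
        then show ?thesis using sat_cong[of \<beta> "q \<circ> ?\<rho>" b] ab by auto
      qed
      ultimately show "q \<in> ?L" using satp by auto
    qed
  qed
  have "card ?L = card ?RA * card ?RB" using bij_betw_same_card[OF bij] by (simp add: card_cartesian_product)
  then show ?thesis
    unfolding stone_fin_def fv_pconj[symmetric] card_pconj using A Bn
    by (simp add: fv_pconj power_add)
qed


lemma mod_pconj:
  assumes M: "is_modeling \<nu> EL" and A: "fv \<alpha> \<noteq> {}" and Bn: "fv \<beta> \<noteq> {}"
  shows "stone_mod \<nu> EL r (pconj \<alpha> \<beta>) = stone_mod \<nu> EL r \<alpha> * stone_mod \<nu> EL r \<beta>"
proof -
  let ?K = "shK \<alpha>"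
  let ?\<rho> = "\<lambda>i::nat. i + ?K"
  let ?A = "fv \<alpha>" let ?B = "fv \<beta>" let ?B' = "?\<rho> ` fv \<beta>"
  let ?\<beta>' = "ren ?\<rho> \<beta>"
  have fvb': "fv ?\<beta>' = ?B'" by (simp add: fv_ren[OF inj_sh])
  have disj: "?A \<inter> ?B' = {}" by (rule disj_pconj)
  have pn: "prob_space \<nu>" using M unfolding is_modeling_def by blast
  interpret PS: product_prob_space "\<lambda>_::nat. \<nu>" UNIV
    by (simp add: product_prob_space_def product_sigma_finite_def product_prob_space_axioms_def
         pn prob_space_imp_sigma_finite)
  interpret PB: prob_space "PiM ?B' (\<lambda>_. \<nu>)" by (rule prob_PiM_nu[OF M])
  let ?X = "defset_mod \<nu> EL r (pconj \<alpha> \<beta>)"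
  let ?XA = "defset_mod \<nu> EL r \<alpha>"
  let ?XB' = "defset_mod \<nu> EL r ?\<beta>'"
  let ?XB = "defset_mod \<nu> EL r \<beta>"
  have X: "?X \<in> sets (PiM (?A \<union> ?B') (\<lambda>_. \<nu>))" using meas_rooted[OF M, of r "pconj \<alpha> \<beta>"] fv_pconj by simp
  have XA: "?XA \<in> sets (PiM ?A (\<lambda>_. \<nu>))" by (rule meas_rooted[OF M])
  have XB': "?XB' \<in> sets (PiM ?B' (\<lambda>_. \<nu>))" using meas_rooted[OF M, of r ?\<beta>'] fvb' by simp
  have XB: "?XB \<in> sets (PiM ?B (\<lambda>_. \<nu>))" by (rule meas_rooted[OF M])
  have "measure (PiM (?A \<union> ?B') (\<lambda>_. \<nu>)) ?X =
     measure (distr (PiM ?A (\<lambda>_. \<nu>) \<Otimes>\<^sub>M PiM ?B' (\<lambda>_. \<nu>)) (PiM (?A \<union> ?B') (\<lambda>_. \<nu>)) (merge ?A ?B')) ?X"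
    using PS.distr_merge[OF disj] by simp
  also have "\<dots> = measure (PiM ?A (\<lambda>_. \<nu>) \<Otimes>\<^sub>M PiM ?B' (\<lambda>_. \<nu>))
      (merge ?A ?B' -` ?X \<inter> space (PiM ?A (\<lambda>_. \<nu>) \<Otimes>\<^sub>M PiM ?B' (\<lambda>_. \<nu>)))"
    by (rule measure_distr[OF measurable_merge X])
  also have "merge ?A ?B' -` ?X \<inter> space (PiM ?A (\<lambda>_. \<nu>) \<Otimes>\<^sub>M PiM ?B' (\<lambda>_. \<nu>)) = ?XA \<times> ?XB'"
  proof -
    have "sat (space \<nu>) EL r (merge ?A ?B' (a, b)) (pconj \<alpha> \<beta>) \<longleftrightarrow>
        sat (space \<nu>) EL r a \<alpha> \<and> sat (space \<nu>) EL r b ?\<beta>'" for a b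
    proof -
      have "sat (space \<nu>) EL r (merge ?A ?B' (a, b)) \<alpha> = sat (space \<nu>) EL r a \<alpha>"
        using disj by (intro sat_cong) simp
      moreover have "sat (space \<nu>) EL r (merge ?A ?B' (a, b)) ?\<beta>' = sat (space \<nu>) EL r b ?\<beta>'"
        using disj fvb' by (intro sat_cong) simp
      ultimately show ?thesis unfolding pconj_def by simp
    qed
    moreover have "merge ?A ?B' p \<in> space (PiM (?A \<union> ?B') (\<lambda>_. \<nu>))"
      if "p \<in> space (PiM ?A (\<lambda>_. \<nu>) \<Otimes>\<^sub>M PiM ?B' (\<lambda>_. \<nu>))" for p
      using measurable_space[OF measurable_merge that] .
    ultimately show ?thesis
      unfolding defset_mod_def fv_pconj fvb' by (auto simp: space_pair_measure)
  qed
  also have "measure (PiM ?A (\<lambda>_. \<nu>) \<Otimes>\<^sub>M PiM ?B' (\<lambda>_. \<nu>)) (?XA \<times> ?XB') =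
      measure (PiM ?A (\<lambda>_. \<nu>)) ?XA * measure (PiM ?B' (\<lambda>_. \<nu>)) ?XB'"
    unfolding measure_def using PB.emeasure_pair_measure_Times[OF XA XB'] by (simp add: enn2real_mult)
  also have "measure (PiM ?B' (\<lambda>_. \<nu>)) ?XB' = measure (PiM ?B (\<lambda>_. \<nu>)) ?XB"
  proof -
    let ?h = "\<lambda>\<omega>. \<lambda>n\<in>?B. \<omega> (?\<rho> n)"
    have hm: "?h \<in> measurable (PiM ?B' (\<lambda>_. \<nu>)) (PiM ?B (\<lambda>_. \<nu>))"
      by (rule measurable_restrict) auto
    have d: "distr (PiM ?B' (\<lambda>_. \<nu>)) (PiM ?B (\<lambda>_. \<nu>)) ?h = PiM ?B (\<lambda>_. \<nu>)"
      using distr_PiM_reindex[of ?B' "\<lambda>_. \<nu>" ?\<rho> ?B] pn by (simp add: inj_on_def)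
    have "measure (PiM ?B (\<lambda>_. \<nu>)) ?XB = measure (PiM ?B' (\<lambda>_. \<nu>)) (?h -` ?XB \<inter> space (PiM ?B' (\<lambda>_. \<nu>)))"
      using measure_distr[OF hm XB] d by simp
    also have "?h -` ?XB \<inter> space (PiM ?B' (\<lambda>_. \<nu>)) = ?XB'"
    proof -
      have "sat (space \<nu>) EL r (?h \<omega>) \<beta> = sat (space \<nu>) EL r \<omega> ?\<beta>'" for \<omega>
      proof -
        have "sat (space \<nu>) EL r (?h \<omega>) \<beta> = sat (space \<nu>) EL r (\<omega> \<circ> ?\<rho>) \<beta>" by (intro sat_cong) simp
        then show ?thesis by (simp add: sat_ren[OF inj_sh])
      qed
      moreover have "?h \<omega> \<in> space (PiM ?B (\<lambda>_. \<nu>))" if "\<omega> \<in> space (PiM ?B' (\<lambda>_. \<nu>))" for \<omega>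
        using measurable_space[OF hm that] .
      ultimately show ?thesis unfolding defset_mod_def fvb' by auto
    qed
    finally show ?thesis by simp
  qed
  finally show ?thesis unfolding stone_mod_def fv_pconj using A Bn by simp
qed


definition norm1 :: "fm \<Rightarrow> fm" where
  "norm1 \<psi> = (if fv \<psi> = {} then Conj \<psi> (Eq (Var 0) (Var 0)) else \<psi>)"

lemma fv_norm1: "fv (norm1 \<psi>) \<noteq> {}" unfolding norm1_def by auto

lemma fin_norm1:
  assumes V: "finite V" "V \<noteq> {}"
  shows "stone_fin V E r (norm1 \<psi>) = stone_fin V E r \<psi>"
proof (cases "fv \<psi> = {}")
  case True
  have fvn: "fv (norm1 \<psi>) = {0}" using True unfolding norm1_def by simp
  have s: "sat V E r \<sigma> \<psi> = sat V E r (\<lambda>_. undefined) \<psi>" for \<sigma> by (rule sat_cong) (simp add: True)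
  have cV: "card (PiE {0::nat} (\<lambda>_. V)) = card V" by (simp add: card_PiE)
  have pos: "card V > 0" using V by (simp add: card_gt_0_iff)
  show ?thesis
  proof (cases "sat V E r (\<lambda>_. undefined) \<psi>")
    case T: True
    then have e: "{\<sigma> \<in> PiE {0} (\<lambda>_. V). sat V E r \<sigma> (norm1 \<psi>)} = PiE {0} (\<lambda>_. V)"
      using True s unfolding norm1_def by auto
    show ?thesis unfolding stone_fin_def fvn e using True T cV pos by simp
  next
    case F: False
    then have e: "{\<sigma> \<in> PiE {0} (\<lambda>_. V). sat V E r \<sigma> (norm1 \<psi>)} = {}"
      using True s unfolding norm1_def by auto
    show ?thesis unfolding stone_fin_def fvn e using True F by simp
  qed
qed (simp add: norm1_def)

lemma mod_norm1:
  assumes M: "is_modeling \<nu> EL"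
  shows "stone_mod \<nu> EL r (norm1 \<psi>) = stone_mod \<nu> EL r \<psi>"
proof (cases "fv \<psi> = {}")
  case True
  have fvn: "fv (norm1 \<psi>) = {0}" using True unfolding norm1_def by simp
  have s: "sat V E r \<sigma> \<psi> = sat V E r (\<lambda>_. undefined) \<psi>" for V E \<sigma> by (rule sat_cong) (simp add: True)
  interpret P: prob_space "PiM {0::nat} (\<lambda>_. \<nu>)" by (rule prob_PiM_nu[OF M])
  show ?thesis
  proof (cases "sat (space \<nu>) EL r (\<lambda>_. undefined) \<psi>")
    case T: True
    then have "defset_mod \<nu> EL r (norm1 \<psi>) = space (PiM {0} (\<lambda>_. \<nu>))"
      using True s unfolding norm1_def defset_mod_def by auto
    then show ?thesis unfolding stone_mod_def fvn using True T P.prob_space by simp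
  next
    case F: False
    then have "defset_mod \<nu> EL r (norm1 \<psi>) = {}"
      using True s unfolding norm1_def defset_mod_def by auto
    then show ?thesis unfolding stone_mod_def fvn using True F by simp
  qed
qed (simp add: norm1_def)

fun mono :: "fm list \<Rightarrow> fm" where
  "mono [] = Eq (Var 0) (Var 0)"
| "mono [a] = norm1 a"
| "mono (a # b # r) = pconj (norm1 a) (mono (b # r))"

lemma fv_mono: "fv (mono \<psi>s) \<noteq> {}"
  by (induction \<psi>s rule: mono.induct) (auto simp: fv_norm1 fv_pconj)

lemma fin_mono:
  assumes V: "finite V" "V \<noteq> {}" and ne: "\<psi>s \<noteq> []"
  shows "stone_fin V E r (mono \<psi>s) = prod_list (map (stone_fin V E r) \<psi>s)"
  using ne
proof (induction \<psi>s rule: mono.induct)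
  case (3 a b rs)
  have "stone_fin V E r (pconj (norm1 a) (mono (b # rs))) = stone_fin V E r (norm1 a) * stone_fin V E r (mono (b # rs))"
    by (rule fin_pconj[OF fv_norm1 fv_mono])
  then show ?case using 3 fin_norm1[OF V] by simp
qed (auto simp: fin_norm1[OF V])

lemma mod_mono:
  assumes M: "is_modeling \<nu> EL" and ne: "\<psi>s \<noteq> []"
  shows "stone_mod \<nu> EL r (mono \<psi>s) = prod_list (map (stone_mod \<nu> EL r) \<psi>s)"
  using ne
proof (induction \<psi>s rule: mono.induct)
  case (3 a b rs)
  have "stone_mod \<nu> EL r (pconj (norm1 a) (mono (b # rs))) = stone_mod \<nu> EL r (norm1 a) * stone_mod \<nu> EL r (mono (b # rs))"
    by (rule mod_pconj[OF M fv_norm1 fv_mono])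
  then show ?case using 3 mod_norm1[OF M] by simp
qed (auto simp: mod_norm1[OF M])

lemma mono_conv:
  fixes V :: "nat \<Rightarrow> 'v set" and E :: "nat \<Rightarrow> 'v \<Rightarrow> 'v \<Rightarrow> bool"
    and \<nu> :: "('a::polish_space) measure" and EL :: "'a \<Rightarrow> 'a \<Rightarrow> bool"
  assumes graphs: "\<And>n. finite (V n) \<and> V n \<noteq> {}"
    and lim: "modeling_limit V E \<nu> EL"
    and xi_lang: "rootfree \<xi>" and xi_fv: "fv \<xi> = {x}"
    and xi_fin: "finite (defset1 (space \<nu>) EL \<xi> x)"
    and xi_card: "\<And>n. card (defset1 (V n) (E n) \<xi> x) = card (defset1 (space \<nu>) EL \<xi> x)"
  shows "(\<lambda>n. \<Sum>s\<in>defset1 (V n) (E n) \<xi> x. prod_list (map (stone_fin (V n) (E n) s) \<psi>s))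
     \<longlonglongrightarrow> (\<Sum>r\<in>defset1 (space \<nu>) EL \<xi> x. prod_list (map (stone_mod \<nu> EL r) \<psi>s))"
proof (cases "\<psi>s = []")
  case True
  then show ?thesis using xi_card by simp
next
  case False
  let ?N = "card (defset1 (space \<nu>) EL \<xi> x)"
  let ?\<gamma> = "mono \<psi>s"
  define B where "B = Suc (Max (insert x (allvars ?\<gamma>)))"
  have B: "x < B" "\<forall>i\<in>allvars ?\<gamma>. i < B"
    unfolding B_def using Max_ge[of "insert x (allvars ?\<gamma>)"] by (auto simp: less_Suc_eq_le)
  have M: "is_modeling \<nu> EL" using lim unfolding modeling_limit_def by blast
  have "(\<lambda>n. \<Sum>s\<in>defset1 (V n) (E n) \<xi> x. prod_list (map (stone_fin (V n) (E n) s) \<psi>s))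
      = (\<lambda>n. \<Sum>t\<in>{1..?N}. stone_fin (V n) (E n) undefined (Theta \<xi> x ?\<gamma> B t))"
  proof
    fix n
    have "(\<Sum>s\<in>defset1 (V n) (E n) \<xi> x. prod_list (map (stone_fin (V n) (E n) s) \<psi>s))
        = (\<Sum>s\<in>defset1 (V n) (E n) \<xi> x. stone_fin (V n) (E n) s ?\<gamma>)"
      using fin_mono[of "V n" \<psi>s "E n"] graphs[of n] False by simp
    also have "\<dots> = (\<Sum>t\<in>{1..?N}. stone_fin (V n) (E n) undefined (Theta \<xi> x ?\<gamma> B t))"
      using fin_count[OF _ fv_mono xi_lang xi_fv B xi_card] graphs by blast
    finally show "(\<Sum>s\<in>defset1 (V n) (E n) \<xi> x. prod_list (map (stone_fin (V n) (E n) s) \<psi>s))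
        = (\<Sum>t\<in>{1..?N}. stone_fin (V n) (E n) undefined (Theta \<xi> x ?\<gamma> B t))" .
  qed
  also have "\<dots> \<longlonglongrightarrow> (\<Sum>t\<in>{1..?N}. stone_mod \<nu> EL undefined (Theta \<xi> x ?\<gamma> B t))"
    using lim rootfree_Theta[OF xi_lang] unfolding modeling_limit_def by (intro tendsto_sum) blast
  also have "(\<Sum>t\<in>{1..?N}. stone_mod \<nu> EL undefined (Theta \<xi> x ?\<gamma> B t))
     = (\<Sum>r\<in>defset1 (space \<nu>) EL \<xi> x. prod_list (map (stone_mod \<nu> EL r) \<psi>s))"
    using mod_count[OF M fv_mono xi_lang xi_fv B xi_fin refl] mod_mono[OF M False] by simp
  finally show ?thesis .
qed


inductive mlc :: "((nat \<Rightarrow> real) \<Rightarrow> real) \<Rightarrow> bool" where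
  base: "mlc (\<lambda>z. c * prod_list (map z l))"
| add: "mlc f \<Longrightarrow> mlc g \<Longrightarrow> mlc (\<lambda>z. f z + g z)"

lemma mlc_const: "mlc (\<lambda>z. c)"
  using mlc.base[of c "[]"] by simp

lemma mlc_coord: "mlc (\<lambda>z. z i)"
  using mlc.base[of 1 "[i]"] by simp

lemma mlc_scale: "mlc f \<Longrightarrow> mlc (\<lambda>z. a * f z)"
proof (induction rule: mlc.induct)
  case (base c l)
  then show ?case using mlc.base[of "a * c" l] by (simp add: mult.assoc)
next
  case (add f g)
  then show ?case using mlc.add[OF add.IH] by (simp add: distrib_left)
qed

lemma mlc_mult_base: "mlc g \<Longrightarrow> mlc (\<lambda>z. (c * prod_list (map z l)) * g z)"
proof (induction rule: mlc.induct)
  case (base c' l')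
  have "(\<lambda>z. c * prod_list (map z l) * (c' * prod_list (map z l'))) = (\<lambda>z. (c * c') * prod_list (map z (l @ l')))"
    by (auto simp: fun_eq_iff)
  then show ?case using mlc.base by metis
next
  case (add f g)
  then show ?case using mlc.add[OF add.IH] by (simp add: distrib_left)
qed

lemma mlc_mult: "mlc f \<Longrightarrow> mlc g \<Longrightarrow> mlc (\<lambda>z. f z * g z)"
proof (induction rule: mlc.induct)
  case (base c l)
  then show ?case by (rule mlc_mult_base)
next
  case (add f1 f2)
  then show ?case using mlc.add[OF add.IH] by (simp add: distrib_right)
qed

lemma mlc_diff: "mlc f \<Longrightarrow> mlc g \<Longrightarrow> mlc (\<lambda>z. f z - g z)"
  using mlc.add[of f "\<lambda>z. (-1) * g z"] mlc_scale[of g "-1"] by simp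

lemma mlc_sum: "finite I \<Longrightarrow> (\<And>i. i \<in> I \<Longrightarrow> mlc (f i)) \<Longrightarrow> mlc (\<lambda>z. \<Sum>i\<in>I. f i z)"
proof (induction I rule: finite_induct)
  case empty then show ?case using mlc_const[of 0] by simp
next
  case (insert a I)
  then show ?case using mlc.add[of "f a" "\<lambda>z. \<Sum>i\<in>I. f i z"] by simp
qed

lemma mlc_prod: "finite I \<Longrightarrow> (\<And>i. i \<in> I \<Longrightarrow> mlc (f i)) \<Longrightarrow> mlc (\<lambda>z. \<Prod>i\<in>I. f i z)"
proof (induction I rule: finite_induct)
  case empty then show ?case using mlc_const[of 1] by simp
next
  case (insert a I)
  then show ?case using mlc_mult[of "f a" "\<lambda>z. \<Prod>i\<in>I. f i z"] by simp
qed

lemma mlc_good: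
  assumes "mlc f"
    and mono: "\<And>l. (\<lambda>n. \<Sum>s\<in>S n. prod_list (map (zv n s) l)) \<longlonglongrightarrow> (\<Sum>r\<in>T. prod_list (map (wv r) l))"
  shows "(\<lambda>n. \<Sum>s\<in>S n. f (zv n s)) \<longlonglongrightarrow> (\<Sum>r\<in>T. f (wv r))"
  using assms(1)
proof (induction rule: mlc.induct)
  case (base c l)
  then show ?case using tendsto_mult_left[OF mono[of l], of c] by (simp add: sum_distrib_left)
next
  case (add f g)
  then show ?case using tendsto_add[OF add.IH] by (simp add: sum.distrib)
qed

definition sqd :: "nat \<Rightarrow> (nat \<Rightarrow> real) \<Rightarrow> (nat \<Rightarrow> real) \<Rightarrow> real" where
  "sqd k v z = (\<Sum>i<k. (z i - v i)^2)"

lemma mlc_sqd: "mlc (sqd k v)"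
  unfolding sqd_def power2_eq_square
  by (intro mlc_sum mlc_mult mlc_diff mlc_coord mlc_const) auto

lemma sqd_nonneg: "sqd k v z \<ge> 0" unfolding sqd_def by (simp add: sum_nonneg)

lemma sqd_self: "sqd k v v = 0" unfolding sqd_def by simp

lemma sqd_pos: "i < k \<Longrightarrow> z i \<noteq> v i \<Longrightarrow> sqd k v z > 0"
proof -
  assume i: "i < k" "z i \<noteq> v i"
  have "(z i - v i)^2 > 0" using i by simp
  also have "(z i - v i)^2 \<le> sqd k v z" unfolding sqd_def
    by (rule member_le_sum[of i "{..<k}" "\<lambda>i. (z i - v i)^2"]) (use i in auto)
  finally show ?thesis .
qed

lemma sqd_ge: "i < k \<Longrightarrow> (z i - v i)^2 \<le> sqd k v z"
  unfolding sqd_def by (rule member_le_sum[of i "{..<k}" "\<lambda>i. (z i - v i)^2"]) auto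

lemma select_lemma:
  fixes S :: "nat \<Rightarrow> 'v set" and T :: "'a set" and zv :: "nat \<Rightarrow> 'v \<Rightarrow> nat \<Rightarrow> real"
    and wv :: "'a \<Rightarrow> nat \<Rightarrow> real"
  assumes finS: "\<And>n. finite (S n)" and cardS: "\<And>n. card (S n) = card T"
    and finT: "finite T" and neT: "T \<noteq> {}"
    and mono: "\<And>l. (\<lambda>n. \<Sum>s\<in>S n. prod_list (map (zv n s) l)) \<longlonglongrightarrow> (\<Sum>r\<in>T. prod_list (map (wv r) l))"
    and zero: "\<And>r i. i \<ge> k \<Longrightarrow> wv r i = 0"
  shows "\<exists>rs r. (\<forall>n. rs n \<in> S n) \<and> r \<in> T \<and> (\<forall>i<k. (\<lambda>n. zv n (rs n) i) \<longlonglongrightarrow> wv r i)"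
proof -
  obtain r0 where r0: "r0 \<in> T" using neT by blast
  let ?w0 = "wv r0"
  let ?W = "wv ` T - {?w0}"
  let ?N = "card T"
  have Npos: "?N > 0" using finT neT by (simp add: card_gt_0_iff)
  define P where "P z = (\<Prod>v\<in>?W. sqd k v z)" for z
  define Q where "Q z = sqd k ?w0 z * P z" for z
  have finW: "finite ?W" using finT by simp
  have mP: "mlc P" unfolding P_def by (intro mlc_prod finW mlc_sqd)
  have mQ: "mlc Q" unfolding Q_def by (intro mlc_mult mP mlc_sqd)
  have Pnn: "P z \<ge> 0" for z unfolding P_def by (intro prod_nonneg) (simp add: sqd_nonneg)
  have Qnn: "Q z \<ge> 0" for z unfolding Q_def using Pnn sqd_nonneg by simp
  have P0: "P ?w0 > 0"
    unfolding P_def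
  proof (rule prod_pos)
    fix v assume v: "v \<in> ?W"
    then have "v \<noteq> ?w0" by simp
    then obtain i where i: "v i \<noteq> ?w0 i" by auto
    have "i < k"
    proof (rule ccontr)
      assume "\<not> i < k"
      then have "?w0 i = 0" "v i = 0" using zero v by auto
      then show False using i by simp
    qed
    then show "sqd k v ?w0 > 0" using i sqd_pos by metis
  qed
  have QT: "Q (wv r) = 0" if "r \<in> T" for r
  proof (cases "wv r = ?w0")
    case True then show ?thesis unfolding Q_def by (simp add: sqd_self)
  next
    case False
    then have "wv r \<in> ?W" using that by auto
    then have "P (wv r) = 0" unfolding P_def using finW
      by (intro prod_zero) (auto intro!: bexI[of _ "wv r"] simp: sqd_self)
    then show ?thesis unfolding Q_def by simp
  qed
  let ?cP = "\<Sum>r\<in>T. P (wv r)"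
  have cP: "?cP > 0"
  proof -
    have "P (wv r0) \<le> ?cP" using finT r0 Pnn by (intro member_le_sum) auto
    then show ?thesis using P0 by simp
  qed
  have SP: "(\<lambda>n. \<Sum>s\<in>S n. P (zv n s)) \<longlonglongrightarrow> ?cP" by (rule mlc_good[OF mP mono])
  have SQ: "(\<lambda>n. \<Sum>s\<in>S n. Q (zv n s)) \<longlonglongrightarrow> 0"
    using mlc_good[OF mQ mono] QT by simp
  have neS: "S n \<noteq> {}" for n using cardS[of n] Npos by auto
  have "\<exists>s\<in>S n. \<forall>s'\<in>S n. P (zv n s') \<le> P (zv n s)" for n
  proof -
    have "Max ((\<lambda>s. P (zv n s)) ` S n) \<in> (\<lambda>s. P (zv n s)) ` S n"
      using finS neS by (intro Max_in) auto
    then obtain s where "s \<in> S n" "P (zv n s) = Max ((\<lambda>s. P (zv n s)) ` S n)" by auto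
    then show ?thesis using finS by (metis Max_ge finite_imageI image_eqI)
  qed
  then obtain rs where rs: "\<And>n. rs n \<in> S n" "\<And>n s'. s' \<in> S n \<Longrightarrow> P (zv n s') \<le> P (zv n (rs n))"
    by metis
  let ?dd = "\<lambda>n. sqd k ?w0 (zv n (rs n))"
  let ?b = "\<lambda>n. real ?N * (\<Sum>s\<in>S n. Q (zv n s)) / (\<Sum>s\<in>S n. P (zv n s))"
  have b: "?b \<longlonglongrightarrow> 0"
    using tendsto_divide[OF tendsto_mult_left[OF SQ, of "real ?N"] SP] cP by simp
  have ev: "eventually (\<lambda>n. (\<Sum>s\<in>S n. P (zv n s)) > 0) sequentially"
    using order_tendstoD(1)[OF SP cP] .
  have "eventually (\<lambda>n. ?dd n \<le> ?b n) sequentially"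
    using ev
  proof (rule eventually_mono)
    fix n assume pos: "(\<Sum>s\<in>S n. P (zv n s)) > 0"
    have le1: "(\<Sum>s\<in>S n. P (zv n s)) \<le> real ?N * P (zv n (rs n))"
    proof -
      have "(\<Sum>s\<in>S n. P (zv n s)) \<le> (\<Sum>s\<in>S n. P (zv n (rs n)))" by (intro sum_mono rs(2))
      also have "\<dots> = real ?N * P (zv n (rs n))" using cardS[of n] by simp
      finally show ?thesis .
    qed
    have le2: "Q (zv n (rs n)) \<le> (\<Sum>s\<in>S n. Q (zv n s))"
      using finS rs(1) Qnn by (intro member_le_sum) auto
    have Ppos: "P (zv n (rs n)) > 0" using le1 pos Npos
      by (smt (verit, best) mult_nonneg_nonpos of_nat_0_le_iff)
    have "?dd n = Q (zv n (rs n)) / P (zv n (rs n))" unfolding Q_def using Ppos by simp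
    also have "\<dots> \<le> (\<Sum>s\<in>S n. Q (zv n s)) / P (zv n (rs n))"
      using le2 Ppos by (simp add: divide_right_mono)
    also have "\<dots> \<le> (\<Sum>s\<in>S n. Q (zv n s)) / ((\<Sum>s\<in>S n. P (zv n s)) / real ?N)"
    proof (rule divide_left_mono)
      show "(\<Sum>s\<in>S n. P (zv n s)) / real ?N \<le> P (zv n (rs n))"
        using le1 Npos by (simp add: divide_le_eq mult.commute)
      show "0 \<le> (\<Sum>s\<in>S n. Q (zv n s))" using Qnn by (simp add: sum_nonneg)
      show "0 < P (zv n (rs n)) * ((\<Sum>s\<in>S n. P (zv n s)) / real ?N)" using Ppos pos Npos by simp
    qed
    also have "\<dots> = ?b n" by simp
    finally show "?dd n \<le> ?b n" .
  qed
  then have dd: "?dd \<longlonglongrightarrow> 0"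
    by (intro tendsto_sandwich[OF _ _ tendsto_const b]) (auto simp: sqd_nonneg)
  have "(\<lambda>n. zv n (rs n) i) \<longlonglongrightarrow> ?w0 i" if i: "i < k" for i
  proof -
    have "(\<lambda>n. (zv n (rs n) i - ?w0 i)^2) \<longlonglongrightarrow> 0"
      by (rule tendsto_sandwich[OF _ _ tendsto_const dd]) (auto simp: sqd_ge[OF i])
    then have "(\<lambda>n. sqrt ((zv n (rs n) i - ?w0 i)^2)) \<longlonglongrightarrow> sqrt 0"
      by (rule tendsto_real_sqrt)
    then have "(\<lambda>n. \<bar>zv n (rs n) i - ?w0 i\<bar>) \<longlonglongrightarrow> 0" by simp
    then have "(\<lambda>n. zv n (rs n) i - ?w0 i) \<longlonglongrightarrow> 0" by (simp add: tendsto_rabs_zero_iff)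
    then show ?thesis by (simp add: LIM_zero_iff)
  qed
  then show ?thesis using rs(1) r0 by blast
qed

theorem lemma4:
  fixes V :: "nat \<Rightarrow> 'v set" and E :: "nat \<Rightarrow> 'v \<Rightarrow> 'v \<Rightarrow> bool"
    and \<nu> :: "('a::polish_space) measure" and EL :: "'a \<Rightarrow> 'a \<Rightarrow> bool"
    and \<xi> :: fm and x :: nat and \<phi>s :: "fm list"
  assumes graphs: "\<And>n. finite (V n) \<and> V n \<noteq> {}"
    and conv: "FO_convergent V E"
    and lim: "modeling_limit V E \<nu> EL"
    and xi_lang: "rootfree \<xi>" and xi_fv: "fv \<xi> = {x}"
    and xi_fin: "finite (defset1 (space \<nu>) EL \<xi> x)"
    and xi_ne: "defset1 (space \<nu>) EL \<xi> x \<noteq> {}"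
    and xi_min: "\<And>\<zeta> y. rootfree \<zeta> \<Longrightarrow> fv \<zeta> = {y} \<Longrightarrow>
                   \<not> (defset1 (space \<nu>) EL \<zeta> y \<noteq> {} \<and>
                      defset1 (space \<nu>) EL \<zeta> y \<subset> defset1 (space \<nu>) EL \<xi> x)"
    and xi_card: "\<And>n. card (defset1 (V n) (E n) \<xi> x) = card (defset1 (space \<nu>) EL \<xi> x)"
  shows "\<exists>rs r. (\<forall>n. rs n \<in> defset1 (V n) (E n) \<xi> x) \<and> r \<in> defset1 (space \<nu>) EL \<xi> x \<and>
           (\<forall>\<phi>\<in>set \<phi>s. (\<lambda>n. stone_fin (V n) (E n) (rs n) \<phi>) \<longlonglongrightarrow> stone_mod \<nu> EL r \<phi>)"
proof -
  let ?k = "length \<phi>s"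
  define zv where "zv n s i = (if i < ?k then stone_fin (V n) (E n) s (\<phi>s ! i) else 0)" for n s i
  define wv where "wv r i = (if i < ?k then stone_mod \<nu> EL r (\<phi>s ! i) else 0)" for r i
  let ?S = "\<lambda>n. defset1 (V n) (E n) \<xi> x"
  let ?T = "defset1 (space \<nu>) EL \<xi> x"
  have finS: "finite (?S n)" for n using graphs[of n] unfolding defset1_def by simp
  have mono: "(\<lambda>n. \<Sum>s\<in>?S n. prod_list (map (zv n s) l)) \<longlonglongrightarrow> (\<Sum>r\<in>?T. prod_list (map (wv r) l))" for l
  proof (cases "\<forall>i\<in>set l. i < ?k")
    case True
    then have m1: "map (zv n s) l = map (stone_fin (V n) (E n) s) (map ((!) \<phi>s) l)" for n s
      unfolding zv_def by auto
    have m2: "map (wv r) l = map (stone_mod \<nu> EL r) (map ((!) \<phi>s) l)" for r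
      unfolding wv_def using True by auto
    show ?thesis unfolding m1 m2
      by (rule mono_conv[OF graphs lim xi_lang xi_fv xi_fin xi_card])
  next
    case False
    then obtain i where i: "i \<in> set l" "\<not> i < ?k" by blast
    have "prod_list (map (zv n s) l) = 0" for n s
      using i unfolding zv_def by (auto simp: prod_list_zero_iff intro!: image_eqI[of _ _ i])
    moreover have "prod_list (map (wv r) l) = 0" for r
      using i unfolding wv_def by (auto simp: prod_list_zero_iff intro!: image_eqI[of _ _ i])
    ultimately show ?thesis by simp
  qed
  have zero: "wv r i = 0" if "i \<ge> ?k" for r i using that unfolding wv_def by simp
  have ex: "\<exists>rs r. (\<forall>n. rs n \<in> ?S n) \<and> r \<in> ?T \<and> (\<forall>i<?k. (\<lambda>n. zv n (rs n) i) \<longlonglongrightarrow> wv r i)"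
    by (rule select_lemma[where S="?S" and T="?T" and zv=zv and wv=wv and k="?k", OF finS xi_card xi_fin xi_ne mono zero])
  obtain rs r where rsr: "(\<forall>n. rs n \<in> ?S n) \<and> r \<in> ?T \<and> (\<forall>i<?k. (\<lambda>n. zv n (rs n) i) \<longlonglongrightarrow> wv r i)"
    using ex by (elim exE) (rule that)
  note rs = rsr[THEN conjunct1] rsr[THEN conjunct2, THEN conjunct1] rsr[THEN conjunct2, THEN conjunct2]
  have conv': "\<forall>\<phi>\<in>set \<phi>s. (\<lambda>n. stone_fin (V n) (E n) (rs n) \<phi>) \<longlonglongrightarrow> stone_mod \<nu> EL r \<phi>"
  proof
    fix \<phi> assume "\<phi> \<in> set \<phi>s"
    then obtain i where i: "i < ?k" "\<phi> = \<phi>s ! i" by (auto simp: in_set_conv_nth)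
    have t: "(\<lambda>n. zv n (rs n) i) \<longlonglongrightarrow> wv r i" using rs(3) i(1) by blast
    have e1: "(\<lambda>n. zv n (rs n) i) = (\<lambda>n. stone_fin (V n) (E n) (rs n) \<phi>)"
      using i by (simp add: zv_def)
    have e2: "wv r i = stone_mod \<nu> EL r \<phi>" using i by (simp add: wv_def)
    show "(\<lambda>n. stone_fin (V n) (E n) (rs n) \<phi>) \<longlonglongrightarrow> stone_mod \<nu> EL r \<phi>"
      using t unfolding e1 e2 .
  qed
  show ?thesis
    by (rule exI[of _ rs], rule exI[of _ r], intro conjI, fact rs(1), fact rs(2), fact conv')
qed

end
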